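(* Consider $\dot x(t)=Ax(t)+Bu(t)$, $x(0)=x_0$, with $A\in\mathbb{R}^{n\times n}$, $B\in\mathbb{R}^{n\times m}$ and $(A,B)$ stabilizable. Let $r\in\mathbb{R}^n$ be a constant reference, $Q\in\mathbb{R}^{n\times n}$ symmetric with $Q>0$, $R\in\mathbb{R}^{m\times m}$ symmetric with $R>0$, and $\alpha>0$. Consider the cost $$J(u)=\int_0^\infty e^{-2\alpha t}\big[(x(t)-r)^\top Q(x(t)-r)+u^\top(t)Ru(t)\big]dt .$$ Let $$A_e=\begin{pmatrix}A-\alpha I_n&0\\0&-\alpha I_n\end{pmatrix},\quad B_e=\begin{pmatrix}B\\0\end{pmatrix},\quad Q_e=\begin{pmatrix}Q&-Q\\-Q&Q\end{pmatrix},$$ and let $P_e^-=\begin{pmatrix}P_1&P_{12}\\P_{12}^\top&P_2\end{pmatrix}$ (blocks of size $n\times n$) be the smallest positive semi-definite solution of $A_e^\top P+PA_e-PB_eR^{-1}B_e^\top P+Q_e=0$. Then for every initial state $x_0$, the input minimizing $J$ over piecewise continuous inputs is generated by the control law $$u(t)=K_1x(t)+K_2r,\qquad K_1=-R^{-1}B^\top P_1,\quad K_2=-R^{-1}B^\top P_{12}.$$ *)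

theory Defs
  imports "HOL-Analysis.Analysis"
begin

text \<open>Real matrices are rendered as real^'c^'r (rows indexed by 'r, columns by 'c).\<close>

definition sym_mat :: "real^'n^'n \<Rightarrow> bool" where
  "sym_mat M \<longleftrightarrow> transpose M = M"

definition pos_def :: "real^'n^'n \<Rightarrow> bool" where
  "pos_def M \<longleftrightarrow> (\<forall>x. x \<noteq> 0 \<longrightarrow> x \<bullet> (M *v x) > 0)"

definition pos_semidef :: "real^'n^'n \<Rightarrow> bool" where
  "pos_semidef M \<longleftrightarrow> (\<forall>x. x \<bullet> (M *v x) \<ge> 0)"

definition cmat :: "real^'c^'r \<Rightarrow> complex^'c^'r" where
  "cmat M = (\<chi> i j. complex_of_real (M $ i $ j))"

definition hurwitz :: "real^'n^'n \<Rightarrow> bool" where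
  "hurwitz M \<longleftrightarrow> (\<forall>(c::complex) v. v \<noteq> 0 \<and> cmat M *v v = c *s v \<longrightarrow> Re c < 0)"

definition stabilizable :: "real^'n^'n \<Rightarrow> real^'m^'n \<Rightarrow> bool" where
  "stabilizable A B \<longleftrightarrow> (\<exists>K :: real^'n^'m. hurwitz (A + B ** K))"

definition block ::
  "real^'c1^'r1 \<Rightarrow> real^'c2^'r1 \<Rightarrow> real^'c1^'r2 \<Rightarrow> real^'c2^'r2 \<Rightarrow> real^('c1+'c2)^('r1+'r2)" where
  "block M11 M12 M21 M22 = (\<chi> i j. case i of
       Inl a \<Rightarrow> (case j of Inl b \<Rightarrow> M11 $ a $ b | Inr b \<Rightarrow> M12 $ a $ b)
     | Inr a \<Rightarrow> (case j of Inl b \<Rightarrow> M21 $ a $ b | Inr b \<Rightarrow> M22 $ a $ b))"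

definition vblock :: "real^'c^'r1 \<Rightarrow> real^'c^'r2 \<Rightarrow> real^'c^('r1+'r2)" where
  "vblock M1 M2 = (\<chi> i j. case i of Inl a \<Rightarrow> M1 $ a $ j | Inr a \<Rightarrow> M2 $ a $ j)"

definition blk11 :: "real^('n+'n)^('n+'n) \<Rightarrow> real^'n^'n" where
  "blk11 P = (\<chi> i j. P $ Inl i $ Inl j)"
definition blk12 :: "real^('n+'n)^('n+'n) \<Rightarrow> real^'n^'n" where
  "blk12 P = (\<chi> i j. P $ Inl i $ Inr j)"

definition piecewise_continuous :: "(real \<Rightarrow> 'a::real_normed_vector) \<Rightarrow> bool" where
  "piecewise_continuous u \<longleftrightarrow>
     (\<forall>T\<ge>0. \<exists>D. finite D \<and>
        (\<forall>t\<in>{0..T} - D. continuous (at t within {0..}) u) \<and>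
        (\<forall>d\<in>D. (d > 0 \<longrightarrow> (\<exists>l. (u \<longlongrightarrow> l) (at_left d))) \<and> (\<exists>l. (u \<longlongrightarrow> l) (at_right d))))"

text \<open>x is the (Caratheodory) state trajectory of x' = A x + B u, x(0) = x0, on [0,\<infinity>):
  x(t) = x0 + \<integral>_0^t (A x(s) + B u(s)) ds for all t \<ge> 0.\<close>
definition trajectory ::
  "real^'n^'n \<Rightarrow> real^'m^'n \<Rightarrow> real^'n \<Rightarrow> (real \<Rightarrow> real^'m) \<Rightarrow> (real \<Rightarrow> real^'n) \<Rightarrow> bool" where
  "trajectory A B x0 u x \<longleftrightarrow>
     (\<forall>t\<ge>0. ((\<lambda>s. A *v x s + B *v u s) has_integral (x t - x0)) {0..t})"

definition cost ::
  "real \<Rightarrow> real^'n^'n \<Rightarrow> real^'m^'m \<Rightarrow> real^'n \<Rightarrow> (real \<Rightarrow> real^'n) \<Rightarrow> (real \<Rightarrow> real^'m) \<Rightarrow> ennreal" where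
  "cost \<alpha> Q R r x u =
     (\<integral>\<^sup>+ t\<in>{0..}. ennreal (exp (-2*\<alpha>*t) *
        ((x t - r) \<bullet> (Q *v (x t - r)) + u t \<bullet> (R *v u t))) \<partial>lborel)"

definition riccati :: "real^'k^'k \<Rightarrow> real^'m^'k \<Rightarrow> real^'k^'k \<Rightarrow> real^'m^'m \<Rightarrow> real^'k^'k \<Rightarrow> bool" where
  "riccati A B Q R P \<longleftrightarrow>
     transpose A ** P + P ** A - P ** B ** matrix_inv R ** transpose B ** P + Q = 0"

definition smallest_psd_riccati ::
  "real^'k^'k \<Rightarrow> real^'m^'k \<Rightarrow> real^'k^'k \<Rightarrow> real^'m^'m \<Rightarrow> real^'k^'k \<Rightarrow> bool" where
  "smallest_psd_riccati A B Q R P \<longleftrightarrow>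
     sym_mat P \<and> pos_semidef P \<and> riccati A B Q R P \<and>
     (\<forall>P'. sym_mat P' \<and> pos_semidef P' \<and> riccati A B Q R P' \<longrightarrow> pos_semidef (P' - P))"

end

theory Submission
  imports Defs "HOL-Real_Asymp.Real_Asymp"
begin
lemma sum_UNIV_plus:
  "sum f (UNIV::('a::finite + 'b::finite) set) = sum (\<lambda>a. f (Inl a)) UNIV + sum (\<lambda>b. f (Inr b)) UNIV"
  using sum.Plus[of "UNIV::'a set" "UNIV::'b set" f] by (simp add: comp_def)

lemma dot_transpose: "x \<bullet> ((M::real^'m^'n) *v y) = (transpose M *v x) \<bullet> y"
  by (simp only: transpose_matrix_vector dot_lmul_matrix)

lemma sym_dot: "sym_mat P \<Longrightarrow> x \<bullet> (P *v y) = y \<bullet> (P *v x)"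
proof -
  assume "sym_mat P"
  then have "transpose P = P" by (simp add: sym_mat_def)
  then show ?thesis using dot_transpose[of x P y] by (simp add: inner_commute)
qed

lemma pos_def_invertible:
  assumes "pos_def R" shows "invertible R"
proof -
  have "inj ((*v) R)"
    unfolding vec.inj_iff_eq_0
  proof (intro allI impI)
    fix x assume "R *v x = 0"
    then have "x \<bullet> (R *v x) = 0" by simp
    then show "x = 0" using assms unfolding pos_def_def by force
  qed
  then obtain B where "B ** R = mat 1" using matrix_left_invertible_injective by blast
  then have "R ** B = mat 1" using matrix_left_right_inverse by blast
  with \<open>B ** R = mat 1\<close> show ?thesis unfolding invertible_def by blast
qed

lemma matrix_inv_props:
  assumes "invertible R" shows "R ** matrix_inv R = mat 1" "matrix_inv R ** R = mat 1"
proof -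
  have "\<exists>A'. R ** A' = mat 1 \<and> A' ** R = mat 1" using assms invertible_def by blast
  then have "R ** matrix_inv R = mat 1 \<and> matrix_inv R ** R = mat 1"
    unfolding matrix_inv_def by (rule someI_ex)
  then show "R ** matrix_inv R = mat 1" "matrix_inv R ** R = mat 1" by auto
qed

lemma arith_helper:
  fixes a' a c q x b y rr s1 s2 s3 :: real
  shows "a' + a - c + q = 0 \<Longrightarrow> a' = a \<Longrightarrow> y = rr + s1 + s2 + s3 \<Longrightarrow> x = a + b
    \<Longrightarrow> s1 = b \<Longrightarrow> s2 = s1 \<Longrightarrow> s3 = c \<Longrightarrow> 2*x + q + rr = y"
  by linarith

lemma are_identity:
  fixes Ae :: "real^'k^'k" and Be :: "real^'m^'k" and Qe P :: "real^'k^'k" and R :: "real^'m^'m"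
  assumes P: "sym_mat P" and Rs: "sym_mat R" and Ri: "invertible R"
    and ric: "riccati Ae Be Qe R P"
  defines "G \<equiv> matrix_inv R ** transpose Be ** P"
  shows "2 * (w \<bullet> (P *v (Ae *v w + Be *v v))) + w \<bullet> (Qe *v w) + v \<bullet> (R *v v)
       = (v + G *v w) \<bullet> (R *v (v + G *v w))"
proof -
  let ?Ri = "matrix_inv R"
  have "(transpose Ae ** P + P ** Ae - P ** Be ** ?Ri ** transpose Be ** P + Qe) *v w = 0"
    using ric unfolding riccati_def by simp
  then have "w \<bullet> ((transpose Ae ** P + P ** Ae - P ** Be ** ?Ri ** transpose Be ** P + Qe) *v w) = 0"
    by simp
  then have E: "w \<bullet> (transpose Ae *v (P *v w)) + w \<bullet> (P *v (Ae *v w))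
      - w \<bullet> (P *v (Be *v (?Ri *v (transpose Be *v (P *v w))))) + w \<bullet> (Qe *v w) = 0"
    by (simp add: matrix_vector_mult_add_rdistrib matrix_vector_mult_diff_rdistrib
        inner_add_right inner_diff_right matrix_vector_mul_assoc[symmetric])
  have e1: "w \<bullet> (transpose Ae *v (P *v w)) = w \<bullet> (P *v (Ae *v w))"
  proof -
    have "w \<bullet> (transpose Ae *v (P *v w)) = (Ae *v w) \<bullet> (P *v w)"
      using dot_transpose[of w "transpose Ae" "P *v w"] by (simp only: transpose_transpose)
    also have "\<dots> = w \<bullet> (P *v (Ae *v w))" using sym_dot[OF P] by simp
    finally show ?thesis .
  qed
  have RG: "R *v (G *v w) = transpose Be *v (P *v w)"
    using matrix_inv_props(1)[OF Ri]
    by (simp add: G_def matrix_vector_mul_assoc matrix_mul_assoc matrix_mul_lid)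
  have e2: "v \<bullet> (R *v (G *v w)) = w \<bullet> (P *v (Be *v v))"
  proof -
    have "v \<bullet> (transpose Be *v (P *v w)) = (Be *v v) \<bullet> (P *v w)"
      using dot_transpose[of v "transpose Be" "P *v w"] by (simp only: transpose_transpose)
    also have "\<dots> = w \<bullet> (P *v (Be *v v))" using sym_dot[OF P] by simp
    finally show ?thesis by (simp only: RG)
  qed
  have e3: "(G *v w) \<bullet> (R *v v) = v \<bullet> (R *v (G *v w))"
    using sym_dot[OF Rs] by simp
  have e4: "(G *v w) \<bullet> (R *v (G *v w)) = w \<bullet> (P *v (Be *v (?Ri *v (transpose Be *v (P *v w)))))"
  proof -
    have "(G *v w) \<bullet> (transpose Be *v (P *v w)) = (Be *v (G *v w)) \<bullet> (P *v w)"
      using dot_transpose[of "G *v w" "transpose Be" "P *v w"] by (simp only: transpose_transpose)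
    also have "\<dots> = w \<bullet> (P *v (Be *v (G *v w)))" using sym_dot[OF P] by simp
    finally have "(G *v w) \<bullet> (R *v (G *v w)) = w \<bullet> (P *v (Be *v (G *v w)))" by (simp only: RG)
    then show ?thesis by (simp add: G_def matrix_vector_mul_assoc[symmetric])
  qed
  have "(v + G *v w) \<bullet> (R *v (v + G *v w)) = v \<bullet> (R *v v) + v \<bullet> (R *v (G *v w))
     + (G *v w) \<bullet> (R *v v) + (G *v w) \<bullet> (R *v (G *v w))"
    by (simp add: matrix_vector_right_distrib inner_add_left inner_add_right)
  moreover have "w \<bullet> (P *v (Ae *v w + Be *v v)) = w \<bullet> (P *v (Ae *v w)) + w \<bullet> (P *v (Be *v v))"
    by (simp add: matrix_vector_right_distrib inner_add_right)
  ultimately show ?thesis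
    by (rule arith_helper[OF E e1 _ _ e2 e3 e4])
qed

lemma vec_has_vector_derivative:
  fixes f :: "real \<Rightarrow> real^'k"
  assumes "\<And>i. ((\<lambda>t. f t $ i) has_real_derivative (f' $ i)) (at t within S)"
  shows "(f has_vector_derivative f') (at t within S)"
  unfolding has_vector_derivative_def
proof (subst has_derivative_componentwise_within, intro ballI)
  fix b :: "real^'k" assume "b \<in> Basis"
  then obtain i where b: "b = axis i 1" using axis_inverse by blast
  have "((\<lambda>t. f t $ i) has_derivative (\<lambda>h. f' $ i * h)) (at t within S)"
    using assms[of i] by (simp add: has_field_derivative_def)
  then show "((\<lambda>x. f x \<bullet> b) has_derivative (\<lambda>x. x *\<^sub>R f' \<bullet> b)) (at t within S)"
    by (simp add: b inner_axis mult.commute)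
qed

lemma linear_ode_exists:
  fixes M :: "real^'k^'k" and z0 :: "real^'k"
  shows "\<exists>z. z 0 = z0 \<and> (\<forall>t. (z has_vector_derivative (M *v z t)) (at t))"
proof -
  define v where "v n = ((\<lambda>x. M *v x) ^^ n) z0" for n
  have vS: "v (Suc n) = M *v v n" for n by (simp add: v_def)
  obtain K where K: "K > 0" "\<And>x. norm (M *v x) \<le> norm x * K"
    using bounded_linear.pos_bounded[OF matrix_vector_mul_bounded_linear[of M]] by blast
  have vb: "norm (v n) \<le> K^n * norm z0" for n
  proof (induction n)
    case 0 then show ?case by (simp add: v_def)
  next
    case (Suc n)
    have "norm (v (Suc n)) \<le> norm (v n) * K" using K(2) vS by simp
    also have "\<dots> \<le> K^n * norm z0 * K" using Suc K(1) by (simp add: mult_right_mono)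
    finally show ?case by (simp add: mult_ac)
  qed
  define c where "c i n = v n $ i / fact n" for i n
  have summ: "summable (\<lambda>n. c i n * y^n)" for i y
  proof (rule summable_comparison_test)
    show "summable (\<lambda>n. norm z0 * (inverse (fact n) * (K * \<bar>y\<bar>)^n))"
      by (rule summable_mult[OF summable_exp])
    show "\<exists>N. \<forall>n\<ge>N. norm (c i n * y ^ n) \<le> norm z0 * (inverse (fact n) * (K * \<bar>y\<bar>) ^ n)"
    proof (intro exI allI impI)
      fix n
      have "norm (c i n * y ^ n) = \<bar>v n $ i\<bar> / fact n * \<bar>y\<bar>^n"
        by (simp add: c_def abs_mult power_abs)
      also have "\<dots> \<le> K^n * norm z0 / fact n * \<bar>y\<bar>^n"
        using order_trans[OF component_le_norm_cart vb]
        by (intro mult_right_mono divide_right_mono) auto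
      also have "\<dots> = norm z0 * (inverse (fact n) * (K * \<bar>y\<bar>) ^ n)"
        by (simp add: field_simps power_mult_distrib)
      finally show "norm (c i n * y ^ n) \<le> norm z0 * (inverse (fact n) * (K * \<bar>y\<bar>) ^ n)" .
    qed
  qed
  define z where "z t = (\<chi> i. \<Sum>n. c i n * t^n)" for t
  have z0: "z 0 = z0"
  proof -
    have "(\<Sum>n. c i n * 0^n) = c i 0" for i by (rule powser_zero)
    then show ?thesis by (simp add: z_def c_def v_def vec_eq_iff)
  qed
  have "(z has_vector_derivative (M *v z t)) (at t)" for t
  proof (rule vec_has_vector_derivative)
    fix i
    have d: "((\<lambda>t. \<Sum>n. c i n * t^n) has_real_derivative (\<Sum>n. diffs (c i) n * t^n)) (at t)"
      by (rule termdiffs_strong_converges_everywhere[OF summ])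
    have "(M *v z t) $ i = (\<Sum>j\<in>UNIV. M $ i $ j * (\<Sum>n. c j n * t^n))"
      by (simp add: matrix_vector_mult_def z_def)
    also have "\<dots> = (\<Sum>j\<in>UNIV. \<Sum>n. M $ i $ j * (c j n * t^n))"
      by (simp add: suminf_mult summ)
    also have "\<dots> = (\<Sum>n. \<Sum>j\<in>UNIV. M $ i $ j * (c j n * t^n))"
      by (rule suminf_sum[symmetric]) (simp add: summable_mult summ)
    also have "\<dots> = (\<Sum>n. diffs (c i) n * t^n)"
    proof (rule suminf_cong)
      fix n
      have "(\<Sum>j\<in>UNIV. M $ i $ j * (c j n * t^n)) = (M *v v n) $ i / fact n * t^n"
        by (simp add: c_def matrix_vector_mult_def sum_distrib_left sum_distrib_right sum_divide_distrib mult_ac)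
      also have "\<dots> = diffs (c i) n * t^n"
      proof -
        have "diffs (c i) n = of_nat (Suc n) * (v (Suc n) $ i / (of_nat (Suc n) * fact n))"
          by (simp add: diffs_def c_def del: of_nat_Suc)
        also have "\<dots> = (M *v v n) $ i / fact n" by (simp add: vS del: of_nat_Suc)
        finally show ?thesis by simp
      qed
      finally show "(\<Sum>j\<in>UNIV. M $ i $ j * (c j n * t^n)) = diffs (c i) n * t^n" .
    qed
    finally have "(M *v z t) $ i = (\<Sum>n. diffs (c i) n * t^n)" .
    then show "((\<lambda>t. z t $ i) has_real_derivative (M *v z t) $ i) (at t)"
      using d by (simp add: z_def)
  qed
  with z0 show ?thesis by blast
qed

definition vcat :: "real^'a \<Rightarrow> real^'b \<Rightarrow> real^('a+'b)" where
  "vcat x y = (\<chi> i. case i of Inl a \<Rightarrow> x $ a | Inr b \<Rightarrow> y $ b)"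

lemma vcat_nth[simp]: "vcat x y $ Inl a = x $ a" "vcat x y $ Inr b = y $ b"
  by (simp_all add: vcat_def)

lemma vec_nth_has_real_derivative:
  "(f has_vector_derivative f') F \<Longrightarrow> ((\<lambda>t. f t $ i) has_real_derivative (f' $ i)) F"
  using bounded_linear.has_vector_derivative[OF bounded_linear_vec_nth]
  by (simp add: has_real_derivative_iff_has_vector_derivative)

lemma affine_ode_exists:
  fixes M :: "real^'n^'n" and c x0 :: "real^'n"
  shows "\<exists>x. x 0 = x0 \<and> (\<forall>t. (x has_vector_derivative (M *v x t + c)) (at t))"
proof -
  let ?N = "block M (mat 1) (0::real^'n^'n) (0::real^'n^'n)"
  obtain z where z0: "z 0 = vcat x0 c" and dz: "\<And>t. (z has_vector_derivative (?N *v z t)) (at t)"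
    using linear_ode_exists[of "vcat x0 c" ?N] by blast
  have Nr: "(?N *v w) $ Inr i = 0" for w i
    by (simp add: matrix_vector_mult_def block_def sum_UNIV_plus)
  have Nl: "(?N *v w) $ Inl i = (M *v (\<chi> j. w $ Inl j)) $ i + w $ Inr i" for w i
    by (simp add: matrix_vector_mult_def block_def sum_UNIV_plus mat_def if_distrib[of "\<lambda>a. a * _"] cong: if_cong)
  have cst: "z t $ Inr i = c $ i" for t i
  proof -
    have "\<forall>s. ((\<lambda>t. z t $ Inr i) has_real_derivative 0) (at s)"
      using vec_nth_has_real_derivative[OF dz, where i = "Inr i"] Nr by simp
    then have "z t $ Inr i = z 0 $ Inr i" by (rule DERIV_isconst_all)
    then show ?thesis using z0 by simp
  qed
  define x where "x t = (\<chi> j. z t $ Inl j)" for t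
  have "x 0 = x0" using z0 by (simp add: x_def vec_eq_iff)
  moreover have "(x has_vector_derivative (M *v x t + c)) (at t)" for t
  proof (rule vec_has_vector_derivative)
    fix i
    show "((\<lambda>t. x t $ i) has_real_derivative (M *v x t + c) $ i) (at t)"
      using vec_nth_has_real_derivative[OF dz, where i = "Inl i"] Nl cst
      by (simp add: x_def)
  qed
  ultimately show ?thesis by blast
qed

lemma cont_mv: "continuous_on S w \<Longrightarrow> continuous_on S (\<lambda>t. (M::real^'a^'b) *v w t)"
  by (rule bounded_linear.continuous_on[OF matrix_vector_mul_bounded_linear])

lemma quad_deriv:
  fixes P :: "real^'k^'k"
  assumes P: "sym_mat P" and d: "(w has_vector_derivative w') (at t)"
  shows "((\<lambda>t. w t \<bullet> (P *v w t)) has_real_derivative (2 * (w t \<bullet> (P *v w'))) ) (at t)"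
proof -
  have d1: "(w has_derivative (\<lambda>h. h *\<^sub>R w')) (at t within UNIV)"
    using d by (simp add: has_vector_derivative_def)
  have d2: "((\<lambda>t. P *v w t) has_derivative (\<lambda>h. h *\<^sub>R (P *v w'))) (at t within UNIV)"
    using bounded_linear.has_vector_derivative[OF matrix_vector_mul_bounded_linear d, of P]
    by (simp add: has_vector_derivative_def)
  have "((\<lambda>t. w t \<bullet> (P *v w t)) has_derivative
      (\<lambda>h. w t \<bullet> (h *\<^sub>R (P *v w')) + (h *\<^sub>R w') \<bullet> (P *v w t))) (at t within UNIV)"
    by (rule has_derivative_inner[OF d1 d2])
  moreover have "(\<lambda>h. w t \<bullet> (h *\<^sub>R (P *v w')) + (h *\<^sub>R w') \<bullet> (P *v w t))
      = (\<lambda>h. (2 * (w t \<bullet> (P *v w'))) * h)"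
    using sym_dot[OF P, of w' "w t"] by (auto simp: algebra_simps)
  ultimately show ?thesis by (simp add: has_field_derivative_def)
qed

lemma core:
  fixes Ae Qe P :: "real^'k^'k" and Be :: "real^'m^'k" and R :: "real^'m^'m"
    and w :: "real \<Rightarrow> real^'k" and v :: "real \<Rightarrow> real^'m"
  assumes P: "sym_mat P" and Rs: "sym_mat R" and Ri: "invertible R" and Rp: "pos_semidef R"
    and ric: "riccati Ae Be Qe R P"
    and T: "0 \<le> T" and D: "finite D" and cw: "continuous_on {0..T} w"
    and dw: "\<And>t. t \<in> {0<..<T} - D \<Longrightarrow> (w has_vector_derivative (Ae *v w t + Be *v v t)) (at t)"
    and int: "(\<lambda>t. w t \<bullet> (Qe *v w t) + v t \<bullet> (R *v v t)) integrable_on {0..T}"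
  shows "\<exists>S\<ge>0. ((\<lambda>t. w t \<bullet> (Qe *v w t) + v t \<bullet> (R *v v t)) has_integral
            (w 0 \<bullet> (P *v w 0) - w T \<bullet> (P *v w T) + S)) {0..T}
          \<and> ((\<forall>t\<in>{0<..<T}-D. v t = -((matrix_inv R ** transpose Be ** P) *v w t)) \<longrightarrow> S = 0)"
proof -
  define G where "G = matrix_inv R ** transpose Be ** P"
  define V where "V t = w t \<bullet> (P *v w t)" for t
  define l where "l t = w t \<bullet> (Qe *v w t) + v t \<bullet> (R *v v t)" for t
  define s where "s t = (v t + G *v w t) \<bullet> (R *v (v t + G *v w t))" for t
  have dV: "(V has_vector_derivative (s t - l t)) (at t)" if "t \<in> {0<..<T} - D" for t
  proof -
    have "(V has_real_derivative (2 * (w t \<bullet> (P *v (Ae *v w t + Be *v v t))))) (at t)"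
      unfolding V_def by (rule quad_deriv[OF P dw[OF that]])
    moreover have "2 * (w t \<bullet> (P *v (Ae *v w t + Be *v v t))) = s t - l t"
      using are_identity[OF P Rs Ri ric, of "w t" "v t"] by (simp add: s_def l_def G_def)
    ultimately show ?thesis by (simp add: has_real_derivative_iff_has_vector_derivative)
  qed
  have cV: "continuous_on {0..T} V"
    unfolding V_def by (intro continuous_on_inner cw cont_mv)
  have I1: "((\<lambda>t. s t - l t) has_integral (V T - V 0)) {0..T}"
    by (rule fundamental_theorem_of_calculus_interior_strong[OF D T dV cV])
  obtain I where I: "(l has_integral I) {0..T}" using int unfolding l_def integrable_on_def by blast
  have I2: "(s has_integral (V T - V 0 + I)) {0..T}"
    using has_integral_add[OF I1 I] by simp
  have snn: "0 \<le> s t" for t using Rp unfolding s_def pos_semidef_def by blast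
  have S0: "0 \<le> V T - V 0 + I" by (rule has_integral_nonneg[OF I2 snn])
  show ?thesis
  proof (intro exI conjI impI)
    show "0 \<le> V T - V 0 + I" by (rule S0)
    show "((\<lambda>t. w t \<bullet> (Qe *v w t) + v t \<bullet> (R *v v t)) has_integral
            (w 0 \<bullet> (P *v w 0) - w T \<bullet> (P *v w T) + (V T - V 0 + I))) {0..T}"
      using I by (simp add: l_def[abs_def] V_def)
    assume fb: "\<forall>t\<in>{0<..<T}-D. v t = -((matrix_inv R ** transpose Be ** P) *v w t)"
    have "(s has_integral 0) {0..T}"
    proof (rule has_integral_spike_finite[where S = "D \<union> {0, T}" and f = "\<lambda>t. 0"])
      show "finite (D \<union> {0, T})" using D by simp
      show "s t = 0" if "t \<in> {0..T} - (D \<union> {0, T})" for t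
        using fb that by (auto simp: s_def G_def)
    qed simp
    then show "V T - V 0 + I = 0" using I2 has_integral_unique by blast
  qed
qed

lemma pc_bounded:
  fixes u :: "real \<Rightarrow> 'a::real_normed_vector"
  assumes pc: "piecewise_continuous u" and T: "0 \<le> T"
  shows "\<exists>C. \<forall>t\<in>{0..T}. norm (u t) \<le> C"
proof -
  obtain D where D: "finite D"
    and cont: "\<forall>t\<in>{0..T} - D. continuous (at t within {0..}) u"
    and lims: "\<forall>d\<in>D. (d > 0 \<longrightarrow> (\<exists>l. (u \<longlongrightarrow> l) (at_left d))) \<and> (\<exists>l. (u \<longlongrightarrow> l) (at_right d))"
    using pc T unfolding piecewise_continuous_def by blast
  have loc: "\<exists>\<delta>>0. \<exists>B. \<forall>s\<in>{0..T}. dist s t < \<delta> \<longrightarrow> norm (u s) \<le> B" if t: "t \<in> {0..T}" for t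
  proof (cases "t \<in> D")
    case False
    then have "continuous (at t within {0..}) u" using cont t by blast
    then obtain d where d: "d > 0" "\<forall>x'\<in>{0..}. dist x' t < d \<longrightarrow> dist (u x') (u t) < 1"
      unfolding continuous_within_eps_delta by (meson zero_less_one)
    show ?thesis
    proof (intro exI conjI ballI impI)
      show "d > 0" by (rule d(1))
      fix s assume s: "s \<in> {0..T}" "dist s t < d"
      then have "dist (u s) (u t) < 1" using d(2) by auto
      then show "norm (u s) \<le> norm (u t) + 1"
        by (metis add_le_cancel_left dist_commute dist_norm le_less norm_triangle_sub order_trans)
    qed
  next
    case True
    then obtain l2 where l2: "(u \<longlongrightarrow> l2) (at_right t)" using lims by blast
    have "eventually (\<lambda>s. dist (u s) l2 < 1) (at_right t)" using tendstoD[OF l2] by simp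
    then obtain b where b: "b > t" "\<And>s. s > t \<Longrightarrow> s < b \<Longrightarrow> dist (u s) l2 < 1"
      unfolding eventually_at_right_field by blast
    obtain a l1 where a: "a < t" "\<And>s. s \<in> {0..T} \<Longrightarrow> a < s \<Longrightarrow> s < t \<Longrightarrow> dist (u s) l1 < 1"
    proof (cases "t > 0")
      case True
      then obtain l1 where l1: "(u \<longlongrightarrow> l1) (at_left t)" using lims \<open>t \<in> D\<close> by blast
      have "eventually (\<lambda>s. dist (u s) l1 < 1) (at_left t)" using tendstoD[OF l1] by simp
      then obtain a where "a < t" "\<And>s. s > a \<Longrightarrow> s < t \<Longrightarrow> dist (u s) l1 < 1"
        unfolding eventually_at_left_field by blast
      then show ?thesis using that by blast
    next
      case False
      then show ?thesis using that[of "t - 1" 0] t by auto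
    qed
    have nb: "norm x \<le> norm l + 1" if "dist x l < 1" for x l :: 'a
      using that by (metis add_le_cancel_left dist_norm le_less norm_triangle_sub order_trans)
    show ?thesis
    proof (intro exI conjI ballI impI)
      show "min (t - a) (b - t) > 0" using a(1) b(1) by simp
      fix s assume s: "s \<in> {0..T}" "dist s t < min (t - a) (b - t)"
      show "norm (u s) \<le> max (norm (u t)) (max (norm l1 + 1) (norm l2 + 1))"
      proof (cases s t rule: linorder_cases)
        case less
        then have "a < s" using s(2) by (simp add: dist_real_def)
        then show ?thesis using nb[OF a(2)[OF s(1) _ less]] by simp
      next
        case equal then show ?thesis by simp
      next
        case greater
        then have "s < b" using s(2) by (simp add: dist_real_def)
        then show ?thesis using nb[OF b(2)[OF greater]] by simp
      qed
    qed
  qed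
  then have "\<forall>t\<in>{0..T}. \<exists>\<delta>. \<delta> > 0 \<and> (\<exists>B. \<forall>s\<in>{0..T}. dist s t < \<delta> \<longrightarrow> norm (u s) \<le> B)" by blast
  then obtain \<delta> where \<delta>: "\<forall>t\<in>{0..T}. \<delta> t > 0 \<and> (\<exists>B. \<forall>s\<in>{0..T}. dist s t < \<delta> t \<longrightarrow> norm (u s) \<le> B)"
    by (metis bchoice)
  then have "\<forall>t\<in>{0..T}. \<exists>B. \<forall>s\<in>{0..T}. dist s t < \<delta> t \<longrightarrow> norm (u s) \<le> B" by blast
  then obtain B where B: "\<forall>t\<in>{0..T}. \<forall>s\<in>{0..T}. dist s t < \<delta> t \<longrightarrow> norm (u s) \<le> B t"
    by (metis bchoice)
  have "compact {0..T}" by simp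
  then obtain C' where C': "C' \<subseteq> {0..T}" "finite C'" "{0..T} \<subseteq> (\<Union>c\<in>C'. ball c (\<delta> c))"
  proof (rule compactE_image[where C = "{0..T}" and f = "\<lambda>c. ball c (\<delta> c)"])
    show "{0..T} \<subseteq> (\<Union>c\<in>{0..T}. ball c (\<delta> c))" using \<delta> by force
  qed auto
  show ?thesis
  proof (intro exI ballI)
    fix s assume s: "s \<in> {0..T}"
    then obtain c where c: "c \<in> C'" "s \<in> ball c (\<delta> c)" using C'(3) by blast
    then have "norm (u s) \<le> B c" using B s C'(1) by (auto simp: dist_commute)
    also have "\<dots> \<le> \<bar>B c\<bar>" by simp
    also have "\<dots> \<le> (\<Sum>c\<in>C'. \<bar>B c\<bar>)" by (rule member_le_sum[OF c(1) _ C'(2)]) simp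
    finally show "norm (u s) \<le> (\<Sum>c\<in>C'. \<bar>B c\<bar>)" .
  qed
qed

lemma traj_y0:
  assumes "trajectory A B x0 u y" shows "y 0 = x0"
proof -
  have "((\<lambda>s. A *v y s + B *v u s) has_integral (y 0 - x0)) {0..0}"
    using assms unfolding trajectory_def by auto
  then have "((\<lambda>s. A *v y s + B *v u s) has_integral (y 0 - x0)) {0}" by simp
  with has_integral_refl(2) have "y 0 - x0 = 0" using has_integral_unique by blast
  then show ?thesis by simp
qed

lemma traj_props:
  fixes A :: "real^'n^'n" and B :: "real^'m^'n"
  assumes tr: "trajectory A B x0 u y" and pc: "piecewise_continuous u" and T: "0 \<le> T"
  shows "\<exists>D. finite D \<and> continuous_on {0..T} y \<and> continuous_on ({0..T} - D) u
      \<and> (\<forall>t\<in>{0<..<T}-D. (y has_vector_derivative (A *v y t + B *v u t)) (at t))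
      \<and> (\<exists>C. \<forall>t\<in>{0..T}. norm (u t) \<le> C)"
proof -
  define f where "f s = A *v y s + B *v u s" for s
  obtain D where D: "finite D"
    and cont: "\<forall>t\<in>{0..T} - D. continuous (at t within {0..}) u"
    using pc T unfolding piecewise_continuous_def by blast
  have hi: "(f has_integral (y t - x0)) {0..t}" if "t \<ge> 0" for t
    using tr that unfolding trajectory_def f_def[abs_def] by blast
  have fi: "f integrable_on {0..T}" using hi[OF T] by blast
  have yeq: "y t = x0 + integral {0..t} f" if "t \<in> {0..T}" for t
    using integral_unique[OF hi, of t] that by simp
  have cy: "continuous_on {0..T} y"
    by (rule continuous_on_eq[OF continuous_on_add[OF continuous_on_const indefinite_integral_continuous_1[OF fi]]])
       (simp add: yeq)
  have cu: "continuous_on ({0..T} - D) u"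
    unfolding continuous_on_eq_continuous_within
    using cont by (auto intro: continuous_within_subset)
  have dy: "(y has_vector_derivative f t) (at t)" if t: "t \<in> {0<..<T} - D" for t
  proof -
    have c1: "continuous (at t within ({0..T} - D)) y"
      using cy t continuous_on_eq_continuous_within continuous_within_subset
      by (metis Diff_iff Diff_subset greaterThanLessThan_iff atLeastAtMost_iff less_imp_le)
    have c2: "continuous (at t within ({0..T} - D)) u"
    proof (rule continuous_within_subset)
      show "continuous (at t within {0..}) u" using cont t by auto
    qed auto
    have cf: "continuous (at t within ({0..T} - D)) f"
      unfolding f_def
      by (intro continuous_add bounded_linear.continuous[OF matrix_vector_mul_bounded_linear] c1 c2)
    have "((\<lambda>s. integral {0..s} f) has_vector_derivative f t) (at t within ({0..T} - D))"
      by (rule integral_has_vector_derivative_continuous_at[OF fi _ D cf]) (use t in auto)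
    moreover have "at t within ({0..T} - D) = at t"
      by (rule at_within_open_subset[where S = "{0<..<T} - D"]) (use t D in \<open>auto intro: open_Diff finite_imp_closed\<close>)
    ultimately have "((\<lambda>s. x0 + integral {0..s} f) has_vector_derivative f t) (at t)"
      by (simp add: has_vector_derivative_add_const add.commute[of x0])
    then show ?thesis
      by (rule has_vector_derivative_transform_within_open[where S = "{0<..<T}"]) (use t yeq in auto)
  qed
  show ?thesis
    using D cy cu dy pc_bounded[OF pc T] unfolding f_def by blast
qed

lemma vcat_inner: "vcat x r \<bullet> vcat a b = x \<bullet> a + r \<bullet> b"
  by (simp add: inner_vec_def sum_UNIV_plus)

lemma vcat_add: "vcat x r + vcat a b = vcat (x + a) (r + b)"
  by (simp add: vec_eq_iff vcat_def split: sum.splits)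

lemma vcat_scaleR: "c *\<^sub>R vcat x r = vcat (c *\<^sub>R x) (c *\<^sub>R r)"
  by (simp add: vec_eq_iff vcat_def split: sum.splits)

lemma vcat_diff: "vcat x r - vcat a b = vcat (x - a) (r - b)"
  by (simp add: vec_eq_iff vcat_def split: sum.splits)

lemma norm_vcat_sq: "norm (vcat x r) ^ 2 = norm x ^ 2 + norm r ^ 2"
  by (simp add: power2_norm_eq_inner vcat_inner)

lemma transpose_vblock:
  "transpose (vblock B (0::real^'m^'n2)) *v z = transpose B *v (\<chi> a. z $ Inl a)"
  by (simp add: vec_eq_iff matrix_vector_mult_def transpose_def vblock_def sum_UNIV_plus)

lemma P_vcat_Inl:
  "(\<chi> a. (P *v vcat x r) $ Inl a) = blk11 P *v x + blk12 P *v r"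
  by (simp add: vec_eq_iff matrix_vector_mult_def blk11_def blk12_def sum_UNIV_plus)

lemma neg_mmul: "(- A) ** B = - ((A::real^'a^'b) ** (B::real^'c^'a))"
  by (simp add: vec_eq_iff matrix_matrix_mult_def sum_negf)

lemma neg_mv: "(- A) *v x = - ((A::real^'a^'b) *v x)"
  by (simp add: vec_eq_iff matrix_vector_mult_def sum_negf)

lemma parse_check: "- A ** B = (- A) ** (B::real^'c^'a)" by (rule refl)

lemma feedback_eq:
  fixes B :: "real^'m^'n" and R :: "real^'m^'m" and P :: "real^('n+'n)^('n+'n)"
  shows "(- matrix_inv R ** transpose B ** blk11 P) *v x + (- matrix_inv R ** transpose B ** blk12 P) *v r
    = - ((matrix_inv R ** transpose (vblock B (0::real^'m^'n)) ** P) *v vcat x r)"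
proof -
  have "(matrix_inv R ** transpose (vblock B (0::real^'m^'n)) ** P) *v vcat x r
      = matrix_inv R *v (transpose B *v (blk11 P *v x + blk12 P *v r))"
    by (simp add: matrix_vector_mul_assoc[symmetric] transpose_vblock P_vcat_Inl del: transpose_matrix_vector)
  then show ?thesis
    by (simp add: matrix_vector_mul_assoc[symmetric] matrix_vector_right_distrib neg_mv neg_mmul
        matrix_vector_mult_add_rdistrib del: transpose_matrix_vector)
qed

lemma delta_h1: "(\<Sum>j\<in>UNIV. (c::real) * (x $ j * (if a = j then 1 else 0))) = c * x $ a"
proof -
  have "(\<Sum>j\<in>UNIV. c * (x $ j * (if a = j then 1 else 0))) = (\<Sum>j\<in>UNIV. if a = j then c * x $ j else 0)"
    by (rule sum.cong) auto
  then show ?thesis by simp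
qed

lemma delta_h2: "(\<Sum>j\<in>UNIV. - ((c::real) * (x $ j * (if a = j then 1 else 0)))) = - (c * x $ a)"
  using delta_h1[of c x a] by (simp add: sum_negf)

lemma Ae_eq:
  fixes A :: "real^'n^'n" and B :: "real^'m^'n"
  shows "block (A - \<alpha> *\<^sub>R mat 1) 0 0 (- \<alpha> *\<^sub>R mat 1) *v vcat x r + vblock B (0::real^'m^'n) *v u
    = vcat (A *v x + B *v u) 0 - \<alpha> *\<^sub>R vcat x r"
  unfolding vec_eq_iff
  apply (rule allI)
  subgoal for i by (cases i) (simp_all add: matrix_vector_mult_def block_def vblock_def sum_UNIV_plus mat_def
      algebra_simps sum_subtractf sum_distrib_left delta_h1 delta_h2)
  done

lemma Qe_eq:
  fixes Q :: "real^'n^'n"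
  shows "vcat x r \<bullet> (block Q (- Q) (- Q) Q *v vcat x r) = (x - r) \<bullet> (Q *v (x - r))"
proof -
  have "block Q (- Q) (- Q) Q *v vcat x r = vcat (Q *v (x - r)) (Q *v (r - x))"
    unfolding vec_eq_iff
    apply (rule allI)
    subgoal for i by (cases i) (simp_all add: matrix_vector_mult_def block_def sum_UNIV_plus algebra_simps
        sum_subtractf sum_negf)
    done
  then show ?thesis
    by (simp add: vcat_inner matrix_vector_mult_diff_distrib inner_diff_left inner_diff_right)
qed

lemma posdef_lower:
  fixes Q :: "real^'n^'n"
  assumes "pos_def Q"
  shows "\<exists>\<mu>>0. \<forall>x. \<mu> * norm x ^ 2 \<le> x \<bullet> (Q *v x)"
proof -
  define f where "f x = x \<bullet> (Q *v x)" for x :: "real^'n"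
  have cf: "continuous_on (sphere 0 1) f"
    unfolding f_def
    by (intro continuous_on_inner continuous_on_id bounded_linear.continuous_on[OF matrix_vector_mul_bounded_linear])
  obtain i :: 'n where True by blast
  have ne: "sphere (0::real^'n) 1 \<noteq> {}"
    using norm_axis_1[of i] by (metis dist_0_norm empty_iff mem_sphere)
  obtain x0 where x0: "x0 \<in> sphere 0 1" "\<forall>y\<in>sphere 0 1. f x0 \<le> f y"
    using continuous_attains_inf[OF compact_sphere ne cf] by blast
  have "x0 \<noteq> 0" using x0(1) by auto
  then have pos: "f x0 > 0" using assms unfolding pos_def_def f_def by blast
  show ?thesis
  proof (intro exI conjI allI)
    show "f x0 > 0" by (rule pos)
    fix x :: "real^'n"
    show "f x0 * norm x ^ 2 \<le> x \<bullet> (Q *v x)"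
    proof (cases "x = 0")
      case True then show ?thesis by simp
    next
      case False
      define y where "y = (1 / norm x) *\<^sub>R x"
      have y: "y \<in> sphere 0 1" using False by (simp add: y_def)
      have x: "x = norm x *\<^sub>R y" using False by (simp add: y_def)
      have "x \<bullet> (Q *v x) = norm x ^ 2 * f y"
        by (subst (1 2) x) (simp add: f_def matrix_vector_mult_scaleR power2_eq_square)
      also have "\<dots> \<ge> norm x ^ 2 * f x0" using x0(2) y by (simp add: mult_left_mono)
      finally show ?thesis by (simp add: mult.commute)
    qed
  qed
qed

lemma quad_bound:
  fixes M :: "real^'n^'n"
  shows "\<exists>K>0. \<forall>a. \<bar>a \<bullet> (M *v a)\<bar> \<le> K * norm a ^ 2"
proof -
  obtain K where K: "K > 0" "\<And>x. norm (M *v x) \<le> norm x * K"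
    using bounded_linear.pos_bounded[OF matrix_vector_mul_bounded_linear[of M]] by blast
  have "\<bar>a \<bullet> (M *v a)\<bar> \<le> K * norm a ^ 2" for a
  proof -
    have "\<bar>a \<bullet> (M *v a)\<bar> \<le> norm a * norm (M *v a)" by (rule Cauchy_Schwarz_ineq2)
    also have "\<dots> \<le> norm a * (norm a * K)" using K(2) by (simp add: mult_left_mono)
    finally show ?thesis by (simp add: power2_eq_square mult_ac)
  qed
  with K show ?thesis by blast
qed

lemma bounded_cont_integrable:
  fixes g :: "real \<Rightarrow> real"
  assumes D: "finite D" and c: "continuous_on ({0..T} - D) g" and b: "\<forall>t\<in>{0..T}. \<bar>g t\<bar> \<le> C"
  shows "g integrable_on {0..T}"
proof -
  have Dl: "D \<in> sets lebesgue" using D negligible_finite negligible_imp_sets by blast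
  have Sl: "{0..T} - D \<in> lmeasurable" using Dl by (intro fmeasurable_Diff) auto
  have m: "g \<in> borel_measurable (lebesgue_on ({0..T} - D))"
    by (rule continuous_imp_measurable_on_sets_lebesgue[OF c]) (use Sl in auto)
  have "g integrable_on ({0..T} - D)"
    by (rule measurable_bounded_by_integrable_imp_integrable[OF m integrable_on_const[OF Sl, of C]])
       (use b Sl in auto)
  then show ?thesis
    by (rule integrable_spike_set) (auto intro: negligible_subset[OF negligible_finite[OF D]])
qed

lemma cont_vcat: "continuous_on S y \<Longrightarrow> continuous_on S (\<lambda>t. vcat (y t) r)"
  unfolding vcat_def
  apply (intro continuous_on_vec_lambda)
  subgoal for i by (cases i) (auto intro: bounded_linear.continuous_on[OF bounded_linear_vec_nth])
  done

lemma deriv_vcat: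
  "(y has_vector_derivative y') (at t) \<Longrightarrow> ((\<lambda>t. vcat (y t) r) has_vector_derivative vcat y' 0) (at t)"
  apply (rule vec_has_vector_derivative)
  subgoal for i by (cases i) (auto intro: vec_nth_has_real_derivative)
  done

lemma meas_ind:
  assumes "continuous_on UNIV (f::real\<Rightarrow>real)"
  shows "(\<lambda>t. ennreal (f t) * indicator {0..(c::real)} t) \<in> borel_measurable lborel"
proof -
  have "f \<in> borel_measurable borel" by (rule borel_measurable_continuous_onI[OF assms])
  then have "(\<lambda>t. ennreal (f t)) \<in> borel_measurable borel"
    using measurable_compose[OF _ measurable_ennreal] by blast
  moreover have "indicator {0..c} \<in> borel_measurable borel"
    by (rule borel_measurable_indicator) simp
  ultimately have "(\<lambda>t. ennreal (f t) * indicator {0..c} t) \<in> borel_measurable borel"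
    by (rule borel_measurable_times_ennreal)
  then show ?thesis by simp
qed

lemma seg:
  fixes A :: "real^'n^'n" and B :: "real^'m^'n" and Q :: "real^'n^'n" and R :: "real^'m^'m"
    and r x0 :: "real^'n" and \<alpha> :: real and Pe :: "real^('n+'n)^('n+'n)"
    and y :: "real \<Rightarrow> real^'n" and u :: "real \<Rightarrow> real^'m"
  assumes Q: "sym_mat Q" "pos_def Q"
    and R: "sym_mat R" "pos_def R"
    and Pe: "smallest_psd_riccati
               (block (A - \<alpha> *\<^sub>R mat 1) 0 0 (- \<alpha> *\<^sub>R mat 1))
               (vblock B (0 :: real^'m^'n))
               (block Q (- Q) (- Q) Q)
               R Pe"
    and alpha: "\<alpha> > 0"
    and tr: "trajectory A B x0 u y" and pc: "piecewise_continuous u" and T: "0 \<le> T"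
  shows "\<exists>S\<ge>0. (\<integral>\<^sup>+t. ennreal (exp (-2*\<alpha>*t) * ((y t - r) \<bullet> (Q *v (y t - r)) + u t \<bullet> (R *v u t)))
                 * indicator {0..T} t \<partial>lborel)
           = ennreal (vcat x0 r \<bullet> (Pe *v vcat x0 r)
                - (exp (-\<alpha>*T) *\<^sub>R vcat (y T) r) \<bullet> (Pe *v (exp (-\<alpha>*T) *\<^sub>R vcat (y T) r)) + S)
         \<and> ((\<forall>t. u t = (- matrix_inv R ** transpose B ** blk11 Pe) *v y t
                     + (- matrix_inv R ** transpose B ** blk12 Pe) *v r) \<longrightarrow> S = 0)"
proof -
  define Ae where "Ae = (block (A - \<alpha> *\<^sub>R mat 1) 0 0 (- \<alpha> *\<^sub>R mat 1) :: real^('n+'n)^('n+'n))"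
  define Be where "Be = vblock B (0 :: real^'m^'n)"
  define Qe where "Qe = block Q (- Q) (- Q) Q"
  define W where "W t = exp (-\<alpha>*t) *\<^sub>R vcat (y t) r" for t
  define v where "v t = exp (-\<alpha>*t) *\<^sub>R u t" for t
  define L where "L t = exp (-2*\<alpha>*t) * ((y t - r) \<bullet> (Q *v (y t - r)) + u t \<bullet> (R *v u t))" for t
  have sP: "sym_mat Pe" and ric: "riccati Ae Be Qe R Pe"
    using Pe unfolding smallest_psd_riccati_def Ae_def Be_def Qe_def by blast+
  have Ri: "invertible R" by (rule pos_def_invertible[OF R(2)])
  have Rp: "pos_semidef R" using R(2) unfolding pos_def_def pos_semidef_def
    by (metis inner_zero_left less_eq_real_def)
  have Qp: "0 \<le> x \<bullet> (Q *v x)" for x using Q(2) unfolding pos_def_def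
    by (metis inner_zero_left less_eq_real_def)
  obtain D where D: "finite D" and cy: "continuous_on {0..T} y" and cu: "continuous_on ({0..T} - D) u"
    and dy: "\<forall>t\<in>{0<..<T}-D. (y has_vector_derivative (A *v y t + B *v u t)) (at t)"
    and Cu: "\<exists>C. \<forall>t\<in>{0..T}. norm (u t) \<le> C"
    using traj_props[OF tr pc T] by blast
  obtain C where C: "\<forall>t\<in>{0..T}. norm (u t) \<le> C" using Cu by blast
  have y0: "y 0 = x0" by (rule traj_y0[OF tr])
  have cw: "continuous_on {0..T} W"
    unfolding W_def by (intro continuous_intros cont_vcat cy)
  have dw: "(W has_vector_derivative (Ae *v W t + Be *v v t)) (at t)" if t: "t \<in> {0<..<T} - D" for t
  proof -
    have e: "((\<lambda>t. exp (-\<alpha>*t)) has_real_derivative (-\<alpha> * exp (-\<alpha>*t))) (at t)"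
      by (auto intro!: derivative_eq_intros)
    have "(W has_vector_derivative (exp (-\<alpha>*t) *\<^sub>R vcat (A *v y t + B *v u t) 0
          + (-\<alpha> * exp (-\<alpha>*t)) *\<^sub>R vcat (y t) r)) (at t)"
      unfolding W_def[abs_def] by (rule has_vector_derivative_scaleR[OF e deriv_vcat]) (use dy t in blast)
    moreover have "Ae *v W t + Be *v v t = exp (-\<alpha>*t) *\<^sub>R vcat (A *v y t + B *v u t) 0
          + (-\<alpha> * exp (-\<alpha>*t)) *\<^sub>R vcat (y t) r"
    proof -
      have "Ae *v W t + Be *v v t = exp (-\<alpha>*t) *\<^sub>R (Ae *v vcat (y t) r + Be *v u t)"
        by (simp add: W_def v_def matrix_vector_mult_scaleR scaleR_right_distrib)
      also have "\<dots> = exp (-\<alpha>*t) *\<^sub>R (vcat (A *v y t + B *v u t) 0 - \<alpha> *\<^sub>R vcat (y t) r)"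
        unfolding Ae_def Be_def by (simp only: Ae_eq)
      finally show ?thesis by (simp add: algebra_simps)
    qed
    ultimately show ?thesis by simp
  qed
  have ee: "exp (-\<alpha>*t) * exp (-\<alpha>*t) = exp (-2*\<alpha>*t)" for t
  proof -
    have "exp (-\<alpha>*t) * exp (-\<alpha>*t) = exp (-\<alpha>*t + -\<alpha>*t)" by (rule mult_exp_exp)
    also have "-\<alpha>*t + -\<alpha>*t = -2*\<alpha>*t" by simp
    finally show ?thesis .
  qed
  have leq: "W t \<bullet> (Qe *v W t) + v t \<bullet> (R *v v t) = L t" for t
  proof -
    have "W t \<bullet> (Qe *v W t) + v t \<bullet> (R *v v t)
        = (exp (-\<alpha>*t) * exp (-\<alpha>*t)) * (vcat (y t) r \<bullet> (Qe *v vcat (y t) r) + u t \<bullet> (R *v u t))"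
      by (simp add: W_def v_def matrix_vector_mult_scaleR algebra_simps)
    also have "\<dots> = L t" unfolding ee L_def Qe_def by (simp only: Qe_eq)
    finally show ?thesis .
  qed
  have Lnn: "0 \<le> L t" for t
    unfolding L_def using Qp[of "y t - r"] Rp unfolding pos_semidef_def
    by (intro mult_nonneg_nonneg add_nonneg_nonneg) auto
  obtain KQ where KQ: "KQ > 0" "\<forall>a. \<bar>a \<bullet> (Q *v a)\<bar> \<le> KQ * norm a ^ 2" using quad_bound by blast
  obtain KR where KR: "KR > 0" "\<forall>a. \<bar>a \<bullet> (R *v a)\<bar> \<le> KR * norm a ^ 2" using quad_bound by blast
  have "bounded (y ` {0..T})" by (intro compact_imp_bounded compact_continuous_image cy) simp
  then obtain Cy where Cy: "\<forall>t\<in>{0..T}. norm (y t) \<le> Cy" unfolding bounded_iff by blast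
  have Lint: "L integrable_on {0..T}"
  proof (rule bounded_cont_integrable[OF D])
    have cy': "continuous_on ({0..T} - D) y" using cy by (rule continuous_on_subset) auto
    show "continuous_on ({0..T} - D) L"
      unfolding L_def by (intro continuous_intros cont_mv cy' cu)
    show "\<forall>t\<in>{0..T}. \<bar>L t\<bar> \<le> KQ * (Cy + norm r)^2 + KR * C^2"
    proof
      fix t assume t: "t \<in> {0..T}"
      have e1: "exp (-2*\<alpha>*t) \<le> 1" using alpha t by simp
      have n1: "norm (y t - r) \<le> Cy + norm r"
        using Cy t norm_triangle_ineq4[of "y t" r] by fastforce
      have n2: "norm (u t) \<le> C" using C t by blast
      have "\<bar>L t\<bar> = L t" using Lnn by simp
      also have "\<dots> \<le> 1 * ((y t - r) \<bullet> (Q *v (y t - r)) + u t \<bullet> (R *v u t))"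
        unfolding L_def by (rule mult_right_mono[OF e1]) (use Qp Rp in \<open>auto simp: pos_semidef_def\<close>)
      also have "\<dots> \<le> KQ * norm (y t - r)^2 + KR * norm (u t)^2"
        using KQ(2)[rule_format, of "y t - r"] KR(2)[rule_format, of "u t"] by simp
      also have "\<dots> \<le> KQ * (Cy + norm r)^2 + KR * C^2"
        using KQ(1) KR(1) n1 n2
        by (intro add_mono mult_left_mono power_mono) auto
      finally show "\<bar>L t\<bar> \<le> KQ * (Cy + norm r)^2 + KR * C^2" .
    qed
  qed
  have int': "(\<lambda>t. W t \<bullet> (Qe *v W t) + v t \<bullet> (R *v v t)) integrable_on {0..T}"
    using Lint by (simp add: leq)
  obtain S where S: "S \<ge> 0"
    and hi: "((\<lambda>t. W t \<bullet> (Qe *v W t) + v t \<bullet> (R *v v t)) has_integral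
            (W 0 \<bullet> (Pe *v W 0) - W T \<bullet> (Pe *v W T) + S)) {0..T}"
    and fb: "(\<forall>t\<in>{0<..<T}-D. v t = -((matrix_inv R ** transpose Be ** Pe) *v W t)) \<longrightarrow> S = 0"
    using core[OF sP R(1) Ri Rp ric T D cw dw int'] by blast
  have hiL: "(L has_integral (W 0 \<bullet> (Pe *v W 0) - W T \<bullet> (Pe *v W T) + S)) {0..T}"
    using hi by (simp add: leq)
  have W0: "W 0 = vcat x0 r" by (simp add: W_def y0)
  have nn: "(\<integral>\<^sup>+t. ennreal (L t) * indicator {0..T} t \<partial>lborel)
      = ennreal (W 0 \<bullet> (Pe *v W 0) - W T \<bullet> (Pe *v W T) + S)"
    by (rule nn_integral_has_integral_lebesgue'[OF Lnn hiL])
  show ?thesis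
  proof (intro exI conjI impI)
    show "S \<ge> 0" by (rule S)
    show "(\<integral>\<^sup>+t. ennreal (exp (-2*\<alpha>*t) * ((y t - r) \<bullet> (Q *v (y t - r)) + u t \<bullet> (R *v u t)))
                 * indicator {0..T} t \<partial>lborel)
           = ennreal (vcat x0 r \<bullet> (Pe *v vcat x0 r)
                - (exp (-\<alpha>*T) *\<^sub>R vcat (y T) r) \<bullet> (Pe *v (exp (-\<alpha>*T) *\<^sub>R vcat (y T) r)) + S)"
      using nn by (simp add: L_def W_def y0)
    assume ufb: "\<forall>t. u t = (- matrix_inv R ** transpose B ** blk11 Pe) *v y t
                     + (- matrix_inv R ** transpose B ** blk12 Pe) *v r"
    have "v t = -((matrix_inv R ** transpose Be ** Pe) *v W t)" for t
      using ufb unfolding v_def W_def Be_def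
      by (simp add: feedback_eq matrix_vector_mult_scaleR)
    then show "S = 0" using fb by blast
  qed
qed

lemma aux1: assumes "0 < (K::real)" "\<epsilon> \<le> 2*K*X + \<epsilon>/2" shows "\<epsilon>/(4*K) \<le> X"
proof -
  have "\<epsilon> \<le> 2*(K*X) + \<epsilon>/2" using assms(2) by (simp only: mult.assoc)
  then have "\<epsilon> \<le> 4*(K*X)" by linarith
  then have "\<epsilon> \<le> X * (4*K)" by (simp add: mult_ac)
  then show ?thesis using assms(1) by (simp add: pos_divide_le_eq)
qed
lemma aux2: "((a::real) + b)^2 \<le> 2*a^2 + 2*b^2"
  using sum_squares_bound[of a b] unfolding power2_sum by linarith
lemma aux3: assumes "(0::real) < K" "Y < \<epsilon> / (2*K)" shows "K * Y \<le> \<epsilon>/2"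
proof -
  have "K * Y \<le> K * (\<epsilon> / (2*K))" using assms by (intro mult_left_mono) auto
  also have "\<dots> = \<epsilon>/2" using assms(1) by simp
  finally show ?thesis .
qed

theorem theorem1:
  fixes A :: "real^'n^'n" and B :: "real^'m^'n" and Q :: "real^'n^'n" and R :: "real^'m^'m"
    and r x0 :: "real^'n" and \<alpha> :: real and Pe :: "real^('n+'n)^('n+'n)"
  assumes stab: "stabilizable A B"
    and Q: "sym_mat Q" "pos_def Q"
    and R: "sym_mat R" "pos_def R"
    and alpha: "\<alpha> > 0"
    and Pe: "smallest_psd_riccati
               (block (A - \<alpha> *\<^sub>R mat 1) 0 0 (- \<alpha> *\<^sub>R mat 1))
               (vblock B (0 :: real^'m^'n))
               (block Q (- Q) (- Q) Q)
               R Pe"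
  shows "\<exists>x. trajectory A B x0
              (\<lambda>t. (- matrix_inv R ** transpose B ** blk11 Pe) *v x t
                  + (- matrix_inv R ** transpose B ** blk12 Pe) *v r) x
           \<and> piecewise_continuous
              (\<lambda>t. (- matrix_inv R ** transpose B ** blk11 Pe) *v x t
                  + (- matrix_inv R ** transpose B ** blk12 Pe) *v r)
           \<and> (\<forall>u y. piecewise_continuous u \<and> trajectory A B x0 u y \<longrightarrow>
                cost \<alpha> Q R r x
                  (\<lambda>t. (- matrix_inv R ** transpose B ** blk11 Pe) *v x t
                      + (- matrix_inv R ** transpose B ** blk12 Pe) *v r)
                \<le> cost \<alpha> Q R r y u)"
proof -
  define Kx where "Kx = - matrix_inv R ** transpose B ** blk11 Pe"
  define Kr where "Kr = - matrix_inv R ** transpose B ** blk12 Pe"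
  define V0 where "V0 = vcat x0 r \<bullet> (Pe *v vcat x0 r)"
  define VV where "VV y T = (exp (-\<alpha>*T) *\<^sub>R vcat (y T) r) \<bullet> (Pe *v (exp (-\<alpha>*T) *\<^sub>R vcat (y T) r))"
    for y :: "real \<Rightarrow> real^'n" and T
  define LL where "LL y u t = exp (-2*\<alpha>*t) * ((y t - r) \<bullet> (Q *v (y t - r)) + u t \<bullet> (R *v u t))"
    for y :: "real \<Rightarrow> real^'n" and u :: "real \<Rightarrow> real^'m" and t
  have costLL: "cost \<alpha> Q R r y u = (\<integral>\<^sup>+t. ennreal (LL y u t) * indicator {0..} t \<partial>lborel)" for y u
    unfolding cost_def LL_def by (rule refl)
  have pP: "pos_semidef Pe" using Pe unfolding smallest_psd_riccati_def by blast
  have VVnn: "0 \<le> VV y T" for y T using pP unfolding pos_semidef_def VV_def by blast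
  have seg': "\<exists>S\<ge>0. (\<integral>\<^sup>+t. ennreal (LL y u t) * indicator {0..T} t \<partial>lborel) = ennreal (V0 - VV y T + S)
       \<and> ((\<forall>t. u t = Kx *v y t + Kr *v r) \<longrightarrow> S = 0)"
    if "trajectory A B x0 u y" "piecewise_continuous u" "0 \<le> T" for y u T
    using seg[OF Q R Pe alpha that] unfolding LL_def V0_def VV_def Kx_def Kr_def by blast
  have Qp: "0 \<le> z \<bullet> (Q *v z)" for z using Q(2) unfolding pos_def_def
    by (metis inner_zero_left less_eq_real_def)
  have Rp: "0 \<le> z \<bullet> (R *v z)" for z using R(2) unfolding pos_def_def
    by (metis inner_zero_left less_eq_real_def)
  have LLnn: "0 \<le> LL y u t" for y u t
    unfolding LL_def using Qp Rp by (intro mult_nonneg_nonneg add_nonneg_nonneg) auto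
  obtain x where x0: "x 0 = x0"
    and dx: "\<And>t. (x has_vector_derivative ((A + B ** Kx) *v x t + B *v (Kr *v r))) (at t)"
    using affine_ode_exists[of x0 "A + B ** Kx" "B *v (Kr *v r)"] by blast
  define ufb where "ufb t = Kx *v x t + Kr *v r" for t
  have dx': "(x has_vector_derivative (A *v x t + B *v ufb t)) (at t)" for t
  proof -
    have "(A + B ** Kx) *v x t + B *v (Kr *v r) = A *v x t + B *v ufb t"
      by (simp add: ufb_def matrix_vector_mult_add_rdistrib matrix_vector_mul_assoc[symmetric]
          matrix_vector_right_distrib)
    then show ?thesis using dx[of t] by simp
  qed
  have traj: "trajectory A B x0 ufb x"
    unfolding trajectory_def
  proof (intro allI impI)
    fix t :: real assume "0 \<le> t"
    then have "((\<lambda>s. A *v x s + B *v ufb s) has_integral (x t - x 0)) {0..t}"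
      using fundamental_theorem_of_calculus[OF \<open>0 \<le> t\<close>, of x "\<lambda>s. A *v x s + B *v ufb s"]
        has_vector_derivative_at_within[OF dx'] by blast
    then show "((\<lambda>s. A *v x s + B *v ufb s) has_integral (x t - x0)) {0..t}" by (simp add: x0)
  qed
  have cx: "continuous_on UNIV x"
    by (rule continuous_at_imp_continuous_on) (use dx' has_vector_derivative_continuous in blast)
  have cufb: "continuous_on UNIV ufb"
    unfolding ufb_def by (intro continuous_intros cont_mv cx)
  have pc: "piecewise_continuous ufb"
    unfolding piecewise_continuous_def
  proof (intro allI impI exI[of _ "{}"] conjI ballI)
    fix T t :: real
    have "continuous (at t within UNIV) ufb" using cufb continuous_on_eq_continuous_within by blast
    then show "continuous (at t within {0..}) ufb" by (rule continuous_within_subset) simp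
  qed auto
  have ufb_eq: "ufb = (\<lambda>t. (- matrix_inv R ** transpose B ** blk11 Pe) *v x t
                  + (- matrix_inv R ** transpose B ** blk12 Pe) *v r)"
    by (simp add: ufb_def[abs_def] Kx_def Kr_def)
  have upper: "cost \<alpha> Q R r x ufb \<le> ennreal V0"
  proof -
    define f where "f n t = ennreal (LL x ufb t) * indicator {0..real n} t" for n :: nat and t
    have cL: "continuous_on UNIV (LL x ufb)"
      unfolding LL_def[abs_def] by (intro continuous_intros cont_mv cx cufb)
    have inc: "incseq f"
      unfolding incseq_def f_def le_fun_def by (auto simp: indicator_def)
    have meas: "f n \<in> borel_measurable lborel" for n
      unfolding f_def by (rule meas_ind[OF cL])
    have lim: "(\<lambda>n. f n t) \<longlonglongrightarrow> ennreal (LL x ufb t) * indicator {0..} t" for t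
    proof (rule tendsto_eventually)
      show "\<forall>\<^sub>F n in sequentially. f n t = ennreal (LL x ufb t) * indicator {0..} t"
        unfolding eventually_sequentially
      proof (intro exI allI impI)
        fix n assume "nat \<lceil>t\<rceil> \<le> n"
        then have "t \<le> real n" by linarith
        then show "f n t = ennreal (LL x ufb t) * indicator {0..} t"
          by (auto simp: f_def indicator_def)
      qed
    qed
    have L: "(\<lambda>n. integral\<^sup>N lborel (f n)) \<longlonglongrightarrow> cost \<alpha> Q R r x ufb"
      unfolding costLL using nn_integral_LIMSEQ[OF inc meas lim] .
    have "integral\<^sup>N lborel (f n) \<le> ennreal V0" for n
    proof -
      obtain S where S: "(\<integral>\<^sup>+t. ennreal (LL x ufb t) * indicator {0..real n} t \<partial>lborel)
          = ennreal (V0 - VV x (real n) + S)" and "(\<forall>t. ufb t = Kx *v x t + Kr *v r) \<longrightarrow> S = 0"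
        using seg'[OF traj pc, of "real n"] by auto
      then have "S = 0" by (simp add: ufb_def)
      then show ?thesis using S VVnn[of x "real n"] by (simp add: f_def[abs_def] ennreal_leI)
    qed
    then show ?thesis by (intro LIMSEQ_le_const2[OF L]) auto
  qed
  have lower: "ennreal V0 \<le> cost \<alpha> Q R r y u"
    if tr: "trajectory A B x0 u y" and pcu: "piecewise_continuous u" for y u
  proof -
    have segT: "ennreal (V0 - VV y T) \<le> cost \<alpha> Q R r y u" if T: "0 \<le> T" for T
    proof -
      obtain S where S: "S \<ge> 0" "(\<integral>\<^sup>+t. ennreal (LL y u t) * indicator {0..T} t \<partial>lborel)
          = ennreal (V0 - VV y T + S)"
        using seg'[OF tr pcu T] by blast
      have "ennreal (V0 - VV y T) \<le> ennreal (V0 - VV y T + S)" using S(1) by (intro ennreal_leI) simp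
      also have "\<dots> = (\<integral>\<^sup>+t. ennreal (LL y u t) * indicator {0..T} t \<partial>lborel)" using S(2) by simp
      also have "\<dots> \<le> (\<integral>\<^sup>+t. ennreal (LL y u t) * indicator {0..} t \<partial>lborel)"
        by (intro nn_integral_mono) (auto simp: indicator_def)
      finally show ?thesis by (simp add: costLL)
    qed
    show ?thesis
    proof (cases "cost \<alpha> Q R r y u = top")
      case True then show ?thesis by simp
    next
      case False
      then obtain c where cnn: "0 \<le> c" and 1: "cost \<alpha> Q R r y u = ennreal c"
        by (cases "cost \<alpha> Q R r y u" rule: ennreal_cases) auto
      have small: "\<exists>T\<ge>0. VV y T < \<epsilon>" if eps: "\<epsilon> > 0" for \<epsilon>
      proof (rule ccontr)
        assume "\<not> ?thesis"
        then have big: "\<And>T. 0 \<le> T \<Longrightarrow> \<epsilon> \<le> VV y T" by (meson not_less)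
        obtain \<mu> where \<mu>: "\<mu> > 0" "\<forall>z. \<mu> * norm z ^ 2 \<le> z \<bullet> (Q *v z)"
          using posdef_lower[OF Q(2)] by blast
        obtain Kp where Kp: "Kp > 0" "\<forall>a. \<bar>a \<bullet> (Pe *v a)\<bar> \<le> Kp * norm a ^ 2"
          using quad_bound by blast
        have "((\<lambda>T. exp (-2*\<alpha>*T) * (3 * norm r ^ 2)) \<longlongrightarrow> 0) at_top"
          using alpha by real_asymp
        then have "eventually (\<lambda>T. exp (-2*\<alpha>*T) * (3 * norm r ^ 2) < \<epsilon> / (2 * Kp)) at_top"
          using eps Kp(1) by (intro order_tendstoD(2)) auto
        then obtain T1 where T1: "\<And>T. T \<ge> T1 \<Longrightarrow> exp (-2*\<alpha>*T) * (3 * norm r ^ 2) < \<epsilon> / (2 * Kp)"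
          unfolding eventually_at_top_linorder by blast
        define T2 where "T2 = max T1 0"
        define c0 where "c0 = \<mu> * \<epsilon> / (4 * Kp)"
        have c0: "c0 > 0" using \<mu>(1) eps Kp(1) by (simp add: c0_def)
        have Lbig: "c0 \<le> LL y u T" if T: "T \<ge> T2" for T
        proof -
          define e where "e = exp (-2*\<alpha>*T)"
          have e0: "e > 0" by (simp add: e_def)
          have ee: "exp (-\<alpha>*T) * exp (-\<alpha>*T) = e"
          proof -
            have "exp (-\<alpha>*T) * exp (-\<alpha>*T) = exp (-\<alpha>*T + -\<alpha>*T)" by (rule mult_exp_exp)
            also have "-\<alpha>*T + -\<alpha>*T = -2*\<alpha>*T" by simp
            finally show ?thesis by (simp add: e_def)
          qed
          have "\<epsilon> \<le> VV y T" using big T by (simp add: T2_def)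
          also have "VV y T = e * (vcat (y T) r \<bullet> (Pe *v vcat (y T) r))"
            by (simp add: VV_def matrix_vector_mult_scaleR ee[symmetric] mult_ac)
          also have "\<dots> \<le> e * (Kp * (norm (y T) ^ 2 + norm r ^ 2))"
            using Kp(2)[rule_format, of "vcat (y T) r"] e0
            by (intro mult_left_mono) (auto simp: norm_vcat_sq)
          also have "\<dots> \<le> e * (Kp * (2 * norm (y T - r) ^ 2 + 3 * norm r ^ 2))"
          proof -
            have "norm (y T) \<le> norm (y T - r) + norm r" using norm_triangle_sub[of "y T" r]
              by (simp add: add.commute)
            then have "norm (y T) ^ 2 \<le> (norm (y T - r) + norm r) ^ 2"
              by (intro power_mono) auto
            also have "\<dots> \<le> 2 * norm (y T - r) ^ 2 + 2 * norm r ^ 2"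
              by (rule aux2)
            finally show ?thesis using e0 Kp(1) by (intro mult_left_mono) auto
          qed
          also have "\<dots> = 2 * Kp * (e * norm (y T - r) ^ 2) + Kp * (e * (3 * norm r ^ 2))"
            by (simp add: algebra_simps)
          also have "Kp * (e * (3 * norm r ^ 2)) \<le> \<epsilon> / 2"
            using aux3[OF Kp(1), of "e * (3 * norm r ^ 2)" \<epsilon>] T1[of T] T by (simp add: T2_def e_def)
          finally have "\<epsilon> \<le> 2 * Kp * (e * norm (y T - r) ^ 2) + \<epsilon> / 2" by simp
          then have "\<epsilon> / (4 * Kp) \<le> e * norm (y T - r) ^ 2" by (rule aux1[OF Kp(1)])
          then have "\<mu> * (\<epsilon> / (4 * Kp)) \<le> \<mu> * (e * norm (y T - r) ^ 2)"
            using \<mu>(1) by (intro mult_left_mono) auto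
          moreover have "c0 = \<mu> * (\<epsilon> / (4 * Kp))" by (simp add: c0_def)
          ultimately have "c0 \<le> \<mu> * (e * norm (y T - r) ^ 2)" by simp
          also have "\<dots> = e * (\<mu> * norm (y T - r) ^ 2)" by simp
          also have "\<dots> \<le> e * ((y T - r) \<bullet> (Q *v (y T - r)) + u T \<bullet> (R *v u T))"
            using \<mu>(2)[rule_format, of "y T - r"] Rp[of "u T"] e0
            by (intro mult_left_mono) auto
          also have "\<dots> = LL y u T" by (simp add: LL_def e_def)
          finally show ?thesis .
        qed
        obtain n :: nat where n: "c / c0 < real n" using reals_Archimedean2 by blast
        have "ennreal (c0 * real n) = (\<integral>\<^sup>+t. ennreal c0 * indicator {T2..T2 + real n} t \<partial>lborel)"
          using c0 by (simp add: nn_integral_cmult_indicator emeasure_lborel_Icc_eq ennreal_mult)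
        also have "\<dots> \<le> (\<integral>\<^sup>+t. ennreal (LL y u t) * indicator {0..} t \<partial>lborel)"
        proof (intro nn_integral_mono)
          fix t
          show "ennreal c0 * indicator {T2..T2 + real n} t \<le> ennreal (LL y u t) * indicator {0..} t"
          proof (cases "t \<in> {T2..T2 + real n}")
            case True
            then have "t \<ge> T2" "t \<ge> 0" by (auto simp: T2_def)
            then show ?thesis using Lbig[of t] True by (auto intro: ennreal_leI)
          qed simp
        qed
        also have "\<dots> = ennreal c" using 1 by (simp add: costLL)
        finally have "c0 * real n \<le> c" using cnn by (simp add: ennreal_le_iff)
        moreover have "c < c0 * real n" using n c0 by (simp add: field_simps)
        ultimately show False by simp
      qed
      have "V0 \<le> c + \<epsilon>" if eps: "\<epsilon> > 0" for \<epsilon>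
      proof -
        obtain T where T: "T \<ge> 0" "VV y T < \<epsilon>" using small[OF eps] by blast
        have "ennreal (V0 - VV y T) \<le> ennreal c" using segT[OF T(1)] 1 by simp
        then have "V0 - VV y T \<le> c" using cnn by (simp add: ennreal_le_iff)
        then show ?thesis using T(2) by simp
      qed
      then have "V0 \<le> c" by (rule field_le_epsilon)
      then show ?thesis using 1 by (simp add: ennreal_leI)
    qed
  qed
  show ?thesis
  proof (intro exI[of _ x] conjI allI impI)
    show "trajectory A B x0 (\<lambda>t. (- matrix_inv R ** transpose B ** blk11 Pe) *v x t
                  + (- matrix_inv R ** transpose B ** blk12 Pe) *v r) x"
      using traj by (simp add: ufb_eq)
    show "piecewise_continuous (\<lambda>t. (- matrix_inv R ** transpose B ** blk11 Pe) *v x t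
                  + (- matrix_inv R ** transpose B ** blk12 Pe) *v r)"
      using pc by (simp add: ufb_eq)
    fix u y assume "piecewise_continuous u \<and> trajectory A B x0 u y"
    then have "ennreal V0 \<le> cost \<alpha> Q R r y u" using lower by blast
    with upper show "cost \<alpha> Q R r x (\<lambda>t. (- matrix_inv R ** transpose B ** blk11 Pe) *v x t
                      + (- matrix_inv R ** transpose B ** blk12 Pe) *v r)
                \<le> cost \<alpha> Q R r y u"
      by (simp add: ufb_eq)
  qed
qed

end
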